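(* Let $q\in(0,\tfrac12)$ and let $T\sim U(0,1)$, $S\sim U(-1,0)$ be independent. Let $p_3^{SH}$ be the probability that the polynomial $$P_{T,S}(x)=(T+S-1)x^3+\big(1-T-2S+q(S-1-T)\big)x^2+\big(S+q(T-S)\big)x$$ has exactly three distinct roots in $[0,1]$. Then $$ p_3^{SH}= \begin{cases} 1-\dfrac{q}{2(1-q)}-\dfrac{1}{1-2q}\Big[\dfrac{(3\sqrt{q}+2)^2\sqrt{q}\,(5q^{3/2}+3q^2-9q-3\sqrt{q}+4)}{12(\sqrt{q}+1)^3}+\dfrac{-27 q^3-18q^2-32\sqrt{1-2q}\,q+48q+16\sqrt{1-2q}-16}{12q}\Big], & 0<q\leq \tfrac49,\\[3mm] 1-\dfrac{q}{2(1-q)}-\dfrac{8\sqrt{q}\,(1-2q)^2}{3(1-q)^3}, & \tfrac49<q<\tfrac12. \end{cases} $$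
   Context: This models the replicator–mutator dynamics of a two-player two-strategy Stag Hunt game with payoff entries $a_{11}=1$, $a_{22}=0$, $a_{21}=T$, $a_{12}=S$ and symmetric mutation probability $q$; the equilibria of the dynamics are exactly the distinct roots in $[0,1]$ of $P_{T,S}$, and "the game has $k$ equilibria" means $P_{T,S}$ has exactly $k$ distinct roots in $[0,1]$. *)

theory Defs
  imports "HOL-Probability.Probability"
begin

definition P_TS :: "real \<Rightarrow> real \<Rightarrow> real \<Rightarrow> real \<Rightarrow> real" where
  "P_TS q T S x = (T + S - 1) * x ^ 3
      + (1 - T - 2 * S + q * (S - 1 - T)) * x ^ 2
      + (S + q * (T - S)) * x"

definition TS_law :: "(real \<times> real) measure" where
  "TS_law = uniform_measure lborel {0<..<1} \<Otimes>\<^sub>M uniform_measure lborel {-1<..<0}"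

definition p3_SH :: "real \<Rightarrow> real" where
  "p3_SH q = measure TS_law
     {(T, S) \<in> space TS_law. card {x \<in> {0..1}. P_TS q T S x = 0} = 3}"

end

theory Submission
  imports Defs "HOL-Library.Quadratic_Discriminant"
begin

definition qA :: "real \<Rightarrow> real \<Rightarrow> real" where "qA T S = T + S - 1"
definition qB :: "real \<Rightarrow> real \<Rightarrow> real \<Rightarrow> real" where "qB q T S = 1 - T - 2*S + q*(S-1-T)"
definition qC :: "real \<Rightarrow> real \<Rightarrow> real \<Rightarrow> real" where "qC q T S = S + q*(T-S)"
definition qD where "qD q T S = discrim (qA T S) (qB q T S) (qC q T S)"
definition R1 where "R1 q T S = (- qB q T S + sqrt (qD q T S)) / (2 * qA T S)"
definition R2 where "R2 q T S = (- qB q T S - sqrt (qD q T S)) / (2 * qA T S)"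
definition good where "good q T S \<longleftrightarrow> qA T S \<noteq> 0 \<and> qD q T S > 0 \<and> 0 < R1 q T S \<and> R1 q T S < 1 \<and> 0 < R2 q T S \<and> R2 q T S < 1"

lemma P_eq: "P_TS q T S x = x * (qA T S * x^2 + qB q T S * x + qC q T S)"
  unfolding P_TS_def qA_def qB_def qC_def by (simp add: algebra_simps power2_eq_square power3_eq_cube)

lemma Q1: "qA T S + qB q T S + qC q T S = - q"
  unfolding qA_def qB_def qC_def by (simp add: algebra_simps)

lemma card3_iff:
  assumes q: "q \<noteq> 0"
  shows "card {x \<in> {0..1}. P_TS q T S x = 0} = 3 \<longleftrightarrow> good q T S"
proof -
  define Z where "Z = {x \<in> {0..1}. P_TS q T S x = 0}"
  define a where "a = qA T S"
  define b where "b = qB q T S"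
  define c where "c = qC q T S"
  have Q1': "a + b + c = -q" using Q1 unfolding a_def b_def c_def .
  have PZ: "P_TS q T S x = x * (a * x^2 + b*x + c)" for x unfolding a_def b_def c_def by (rule P_eq)
  show ?thesis
  proof (cases "a = 0")
    case True
    have "Z \<subseteq> {0, -c/b}"
    proof
      fix x assume "x \<in> Z"
      then have "x * (b*x + c) = 0" using PZ True unfolding Z_def by auto
      then have "x = 0 \<or> b * x + c = 0" by auto
      moreover have "b = 0 \<Longrightarrow> c \<noteq> 0" using Q1' True q by auto
      ultimately show "x \<in> {0, -c/b}"
      proof (cases "b = 0")
        case False
        then show ?thesis using \<open>x = 0 \<or> b * x + c = 0\<close> by (auto simp: field_simps)
      qed (use \<open>x = 0 \<or> b * x + c = 0\<close> in auto)
    qed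
    then have "card Z \<le> card {0, -c/b}" by (intro card_mono) auto
    also have "\<dots> \<le> 2" by (simp add: card_insert_if)
    finally have "card Z \<noteq> 3" by auto
    moreover have "\<not> good q T S" using True unfolding good_def a_def by auto
    ultimately show ?thesis unfolding Z_def by auto
  next
    case False
    define r1 where "r1 = R1 q T S"
    define r2 where "r2 = R2 q T S"
    define D where "D = qD q T S"
    have root: "a * x^2 + b*x + c = 0 \<longleftrightarrow> D \<ge> 0 \<and> (x = r1 \<or> x = r2)" for x
      using discriminant_iff[OF False, of x b c] unfolding D_def qD_def r1_def r2_def R1_def R2_def a_def b_def c_def
      by simp
    have Zsub: "Z \<subseteq> {0, r1, r2}" unfolding Z_def using PZ root by auto
    have r1Z: "D \<ge> 0 \<Longrightarrow> r1 \<in> {0..1} \<Longrightarrow> r1 \<in> Z" and r2Z: "D \<ge> 0 \<Longrightarrow> r2 \<in> {0..1} \<Longrightarrow> r2 \<in> Z"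
      unfolding Z_def using PZ root by auto
    have ne1: "D \<ge> 0 \<Longrightarrow> r1 \<noteq> 1" "D \<ge> 0 \<Longrightarrow> r2 \<noteq> 1"
      using root[of 1] Q1' q by auto
    have eqD: "r1 = r2 \<longleftrightarrow> D = 0" if "D \<ge> 0"
      using False that unfolding r1_def r2_def R1_def R2_def D_def a_def by (auto simp: field_simps)
    have "0 \<in> Z" unfolding Z_def by (simp add: P_TS_def)
    show ?thesis unfolding Z_def[symmetric]
    proof
      assume c3: "card Z = 3"
      have "card {0, r1, r2} \<le> 3" by (simp add: card_insert_if)
      moreover have "card Z \<le> card {0, r1, r2}" using Zsub by (intro card_mono) auto
      ultimately have cc: "card {0, r1, r2} = 3" using c3 by auto
      then have ZZ: "Z = {0, r1, r2}" using card_subset_eq[OF _ Zsub] c3 by auto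
      from cc have d: "r1 \<noteq> 0" "r2 \<noteq> 0" "r1 \<noteq> r2" by (auto simp: card_insert_if split: if_splits)
      have "r1 \<in> Z" "r2 \<in> Z" using ZZ by auto
      then have "D \<ge> 0" "r1 \<in> {0..1}" "r2 \<in> {0..1}" unfolding Z_def using PZ root d by auto
      then have "D > 0 \<and> 0 < r1 \<and> r1 < 1 \<and> 0 < r2 \<and> r2 < 1" using d ne1 eqD by force
      then show "good q T S" using False unfolding good_def D_def r1_def r2_def a_def by auto
    next
      assume g: "good q T S"
      then have g': "D > 0" "0 < r1" "r1 < 1" "0 < r2" "r2 < 1"
        unfolding good_def D_def r1_def r2_def by auto
      then have "Z = {0, r1, r2}" using Zsub r1Z r2Z \<open>0 \<in> Z\<close> by auto
      moreover have "r1 \<noteq> r2" using eqD g' by auto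
      ultimately show "card Z = 3" using g' by (simp add: card_insert_if)
    qed
  qed
qed


lemma sq_less: "0 \<le> (x::real) \<Longrightarrow> 0 \<le> y \<Longrightarrow> x < y \<longleftrightarrow> x^2 < y^2"
proof
  assume "0 \<le> x" "x < y" then show "x^2 < y^2" by (intro power_strict_mono) auto
next
  assume "0 \<le> x" "0 \<le> y" "x^2 < y^2" then show "x < y" using power_less_imp_less_base[of x 2 y] by auto
qed

lemma roots_neg:
  fixes a b c :: real
  assumes a: "a < 0" and abc: "a + b + c < 0" and D: "b^2 - 4*a*c > 0"
  shows "(0 < (-b + sqrt (b^2-4*a*c))/(2*a) \<and> (-b + sqrt (b^2-4*a*c))/(2*a) < 1 \<and>
          0 < (-b - sqrt (b^2-4*a*c))/(2*a) \<and> (-b - sqrt (b^2-4*a*c))/(2*a) < 1)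
         \<longleftrightarrow> (c < 0 \<and> 0 < b \<and> b < -2*a)"
proof -
  define w where "w = sqrt (b^2-4*a*c)"
  have w0: "w \<ge> 0" and w2: "w^2 = b^2 - 4*a*c" unfolding w_def using D by auto
  have a2: "2*a < 0" using a by simp
  have e1: "0 < (-b + w)/(2*a) \<longleftrightarrow> w < b" using a2 by (simp add: divide_pos_neg zero_less_divide_iff)
  have e2: "(-b + w)/(2*a) < 1 \<longleftrightarrow> 2*a < -b + w" using a2 by (simp add: divide_less_eq)
  have e3: "0 < (-b - w)/(2*a) \<longleftrightarrow> -b - w < 0" using a2 by (simp add: zero_less_divide_iff)
  have e4: "(-b - w)/(2*a) < 1 \<longleftrightarrow> 2*a < -b - w" using a2 by (simp add: divide_less_eq)
  have f1: "w < b \<longleftrightarrow> 0 < b \<and> c < 0"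
  proof
    assume "w < b"
    then have "0 < b" "w^2 < b^2" using w0 sq_less[of w b] by auto
    then have "a*c > 0" using w2 by simp
    then show "0 < b \<and> c < 0" using a \<open>0 < b\<close> by (simp add: zero_less_mult_iff)
  next
    assume h: "0 < b \<and> c < 0"
    then have "a*c > 0" using a by (simp add: mult_neg_neg)
    then have "w^2 < b^2" using w2 by simp
    then show "w < b" using w0 h sq_less[of w b] by auto
  qed
  have f2: "b + w < -2*a \<longleftrightarrow> b < -2*a"
  proof
    assume "b + w < -2*a" then show "b < -2*a" using w0 by simp
  next
    assume h: "b < -2*a"
    have "a * (a + b + c) > 0" using a abc by (simp add: mult_neg_neg)
    then have "w^2 < (-2*a-b)^2" using w2 by (simp add: power2_eq_square algebra_simps)
    then have "w < -2*a - b" using w0 h sq_less[of w "-2*a-b"] by auto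
    then show "b + w < -2*a" by simp
  qed
  show ?thesis unfolding w_def[symmetric] e1 e2 e3 e4 using f1 f2 w0 by auto
qed

definition vm :: "real \<Rightarrow> real \<Rightarrow> real" where
  "vm q T = ((1-q)*(1+T) - 2* sqrt((1-2*q)*T))/q"

lemma D_id: "qD q T S = (q*(-S) - (1-q)*(1+T))^2 - 4*((1-2*q)*T)"
  unfolding qD_def discrim_def qA_def qB_def qC_def by (simp add: power2_eq_square algebra_simps)

lemma box_iff:
  assumes q: "0 < q" "q < 1/2" and T: "0 < T" "T < 1" and S: "-1 < S" "S < 0"
  shows "good q T S \<longleftrightarrow> (q*T/(1-q) < -S \<and> -S < vm q T)"
proof -
  define v where "v = -S"
  have v: "0 < v" "v < 1" using S unfolding v_def by auto
  define a where "a = qA T S"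
  define b where "b = qB q T S"
  define c where "c = qC q T S"
  have a: "a < 0" unfolding a_def qA_def using T S by simp
  have abc: "a + b + c < 0" using Q1[of T S q] q unfolding a_def b_def c_def by simp
  have cneg: "c < 0 \<longleftrightarrow> q*T/(1-q) < v"
  proof -
    have "c = q*T - (1-q)* v" unfolding c_def qC_def v_def by (simp add: algebra_simps)
    moreover have "q*T/(1-q) < v \<longleftrightarrow> q*T < (1-q)* v" using q by (simp add: divide_less_eq mult.commute)
    ultimately show ?thesis by simp
  qed
  have bpos: "c < 0 \<Longrightarrow> 0 < b"
  proof -
    assume "c < 0"
    then have hv: "q*T < (1-q)* v" unfolding c_def qC_def v_def by (simp add: algebra_simps)
    have "(2-q)*(q*T) < (2-q)*((1-q)* v)" using hv q by (intro mult_strict_left_mono) auto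
    moreover have "(1-2*q)*T < (1-2*q)*1" using T q by (intro mult_strict_left_mono) auto
    moreover have "(1-q)*b = (1-q)^2 - (1+q)*(1-q)*T + (2-q)*((1-q)* v)"
      unfolding b_def qB_def v_def by (simp add: power2_eq_square algebra_simps)
    ultimately have "(1-q)*b > q^2" by (simp add: power2_eq_square algebra_simps)
    then have "(1-q)*b > 0" using q by (smt (verit) zero_less_power2)
    then show "0 < b" using q by (simp add: zero_less_mult_iff)
  qed
  have bsmall: "b < -2*a"
  proof -
    have "(1-q)*T < (1-q)*1" using T q by (intro mult_strict_left_mono) auto
    moreover have "q*S < 0" using q S by (simp add: mult_pos_neg)
    ultimately show ?thesis using q unfolding a_def b_def qA_def qB_def by (simp add: algebra_simps)
  qed
  define R where "R = sqrt((1-2*q)*T)"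
  have R0: "R \<ge> 0" and R2: "R^2 = (1-2*q)*T" unfolding R_def using q T by auto
  have Dpos: "qD q T S > 0 \<longleftrightarrow> v < vm q T"
  proof -
    have "q* v < q" using mult_strict_left_mono[of v 1 q] q v by simp
    moreover have "(1-q) \<le> (1-q)*(1+T)" using mult_left_mono[of 1 "1+T" "1-q"] q T by simp
    ultimately have X: "0 < (1-q)*(1+T) - q* v" using q by linarith
    have "qD q T S = ((1-q)*(1+T) - q* v)^2 - (2*R)^2" unfolding D_id v_def R2[symmetric]
      by (simp add: power2_eq_square algebra_simps)
    then have "qD q T S > 0 \<longleftrightarrow> 2*R < (1-q)*(1+T) - q* v"
      using sq_less[of "2*R" "(1-q)*(1+T) - q* v"] R0 X by auto
    also have "\<dots> \<longleftrightarrow> q* v < (1-q)*(1+T) - 2*R" by auto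
    also have "\<dots> \<longleftrightarrow> v < vm q T" unfolding vm_def R_def[symmetric] using q
      by (simp add: less_divide_eq mult.commute)
    finally show ?thesis .
  qed
  have gd: "good q T S \<longleftrightarrow> qD q T S > 0 \<and> c < 0 \<and> 0 < b \<and> b < -2*a"
  proof (cases "qD q T S > 0")
    case True
    have "qD q T S = b^2 - 4*a*c" unfolding qD_def discrim_def a_def b_def c_def ..
    then show ?thesis using roots_neg[OF a abc] True a unfolding good_def R1_def R2_def a_def[symmetric] b_def[symmetric] c_def[symmetric]
      by auto
  next
    case False then show ?thesis unfolding good_def by auto
  qed
  show ?thesis unfolding gd Dpos cneg[symmetric] v_def[symmetric] using bpos bsmall by auto
qed


lemma ftc_real:
  fixes F f :: "real \<Rightarrow> real"
  assumes "a \<le> b" "\<And>x. x \<in> {a..b} \<Longrightarrow> (F has_real_derivative f x) (at x)"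
  shows "(f has_integral (F b - F a)) {a..b}"
  using assms by (intro fundamental_theorem_of_calculus)
    (auto simp: has_real_derivative_iff_has_vector_derivative[symmetric] intro: has_field_derivative_at_within)

definition F1 :: "real \<Rightarrow> real \<Rightarrow> real" where "F1 q T = T - (q/(2*(1-q))) * T^2"
definition F2 :: "real \<Rightarrow> real \<Rightarrow> real" where
  "F2 q T = ((1-q)/q)*(T + T^2/2) - ((4/3)* sqrt(1-2*q)/q)*(T * sqrt T) - (q/(2*(1-q))) * T^2"

lemma F1_deriv:
  assumes "q < 1/2" shows "(F1 q has_real_derivative (1 - q*x/(1-q))) (at x)"
proof -
  have h: "1-q \<noteq> 0" "2-2*q \<noteq> 0" using assms by auto
  show ?thesis unfolding F1_def
  apply (rule derivative_eq_intros refl | simp)+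
  using h by (simp add: field_simps)
qed

lemma vm_sqrt: "0 \<le> T \<Longrightarrow> q < 1/2 \<Longrightarrow> vm q T = ((1-q)*(1+T) - 2 * sqrt(1-2*q) * sqrt T)/q"
  unfolding vm_def by (simp add: real_sqrt_mult)

lemma F2_deriv:
  assumes x: "0 < x" and q: "0 < q" "q < 1/2"
  shows "(F2 q has_real_derivative (vm q x - q*x/(1-q))) (at x)"
proof -
  have sx: "sqrt x > 0" "sqrt x * sqrt x = x" using x by auto
  have d1: "((\<lambda>T. T * sqrt T) has_real_derivative (3/2 * sqrt x)) (at x)"
  proof (rule DERIV_cong)
    show "((\<lambda>T. T * sqrt T) has_real_derivative (1 * sqrt x + inverse (sqrt x) / 2 * x)) (at x)"
      by (intro DERIV_mult DERIV_ident DERIV_real_sqrt x)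
    have "inverse (sqrt x) / 2 * x = sqrt x / 2" using sx
      by (simp add: field_simps)
    then show "1 * sqrt x + inverse (sqrt x) / 2 * x = 3/2 * sqrt x" by simp
  qed
  have d2: "((\<lambda>T. T + T^2/2) has_real_derivative (1 + x)) (at x)"
    by (rule derivative_eq_intros refl | simp)+
  have d3: "((\<lambda>T. T^2) has_real_derivative (2 * x)) (at x)"
    by (rule derivative_eq_intros refl | simp)+
  have "(F2 q has_real_derivative ((1-q)/q * (1+x) - ((4/3)* sqrt(1-2*q)/q) * (3/2 * sqrt x) - (q/(2*(1-q))) * (2*x))) (at x)"
    unfolding F2_def by (intro DERIV_diff DERIV_cmult d1 d2 d3)
  moreover have "(1-q)/q * (1+x) - ((4/3)* sqrt(1-2*q)/q) * (3/2 * sqrt x) - (q/(2*(1-q))) * (2*x) = vm q x - q*x/(1-q)"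
    unfolding vm_sqrt[OF less_imp_le[OF x] q(2)] using q by (simp add: field_simps)
  ultimately show ?thesis by simp
qed


definition gfun :: "real \<Rightarrow> real \<Rightarrow> real" where "gfun q T = min 1 (vm q T) - q*T/(1-q)"
definition t1 :: "real \<Rightarrow> real" where "t1 q = sqrt(1-2*q)/(1 + sqrt q)"
definition t2 :: "real \<Rightarrow> real" where "t2 q = sqrt(1-2*q)/(1 - sqrt q)"
definition Ival :: "real \<Rightarrow> real" where
  "Ival q = (if q \<le> 4/9 then F1 q ((t1 q)^2) - F1 q 0 + F2 q 1 - F2 q ((t1 q)^2)
     else F1 q ((t1 q)^2) - F1 q 0 + F2 q ((t2 q)^2) - F2 q ((t1 q)^2) + F1 q 1 - F1 q ((t2 q)^2))"

lemma vm_fac: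
  assumes T: "0 \<le> T" and q: "0 < q" "q < 1/2"
  shows "q*(vm q T - 1) = ((1 + sqrt q)* sqrt T - sqrt(1-2*q))*((1 - sqrt q)* sqrt T - sqrt(1-2*q))"
proof -
  define s where "s = sqrt q"
  define r where "r = sqrt(1-2*q)"
  define t where "t = sqrt T"
  have ss: "s* s = q" unfolding s_def using q by simp
  have rr: "r*r = 1-2*q" unfolding r_def using q by simp
  have tt: "t*t = T" unfolding t_def using T by simp
  have "q * vm q T = (1-q)*(1+T) - 2*r*t" unfolding vm_sqrt[OF T q(2)] r_def t_def using q by simp
  moreover have "((1+s)*t - r)*((1-s)*t - r) = (1 - s* s)*(t*t) - 2*r*t + r*r" by algebra
  ultimately show ?thesis unfolding s_def[symmetric] r_def[symmetric] t_def[symmetric] ss rr tt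
    by (simp add: algebra_simps)
qed

lemma basic_facts:
  assumes q: "0 < q" "q < 1/2"
  shows "0 < t1 q" "t1 q < 1" "t1 q < t2 q" "q \<le> 4/9 \<longleftrightarrow> 1 \<le> t2 q" "0 < t2 q"
proof -
  define s where "s = sqrt q"
  define r where "r = sqrt(1-2*q)"
  have s: "0 < s" "s < 1" "s* s = q" unfolding s_def using q by (auto simp: real_sqrt_less_iff[of q 1, simplified])
  have r: "0 < r" "r < 1" "r*r = 1-2*q" unfolding r_def using q by auto
  show "0 < t1 q" "0 < t2 q" unfolding t1_def t2_def s_def[symmetric] r_def[symmetric] using s r by auto
  show "t1 q < 1" unfolding t1_def s_def[symmetric] r_def[symmetric] using s r by (simp add: divide_less_eq)
  show "t1 q < t2 q" unfolding t1_def t2_def s_def[symmetric] r_def[symmetric] using s r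
    by (intro divide_strict_left_mono) (auto simp: mult_pos_pos)
  have "1 \<le> t2 q \<longleftrightarrow> 1 - s \<le> r" unfolding t2_def s_def[symmetric] r_def[symmetric] using s r by (simp add: le_divide_eq)
  also have "\<dots> \<longleftrightarrow> (1-s)*(1-s) \<le> r*r" using s r
    by (metis abs_le_square_iff abs_of_nonneg diff_ge_0_iff_ge less_imp_le power2_eq_square)
  also have "\<dots> \<longleftrightarrow> 3*(s* s) \<le> 2* s" unfolding r(3) using s by (simp add: algebra_simps)
  also have "\<dots> \<longleftrightarrow> s \<le> 2/3" using s by auto
  also have "\<dots> \<longleftrightarrow> q \<le> 4/9"
  proof -
    have "s \<le> 2/3 \<longleftrightarrow> s* s \<le> (2/3)*(2/3)" using s
      by (metis abs_le_square_iff abs_of_nonneg less_imp_le power2_eq_square zero_le_divide_iff zero_le_numeral)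
    then show ?thesis using s by simp
  qed
  finally show "q \<le> 4/9 \<longleftrightarrow> 1 \<le> t2 q" by simp
qed

lemma min_cases:
  assumes T: "0 \<le> T" and q: "0 < q" "q < 1/2"
  shows "T \<le> (t1 q)^2 \<Longrightarrow> min 1 (vm q T) = 1"
    and "(t1 q)^2 \<le> T \<Longrightarrow> T \<le> (t2 q)^2 \<Longrightarrow> min 1 (vm q T) = vm q T"
    and "(t2 q)^2 \<le> T \<Longrightarrow> min 1 (vm q T) = 1"
proof -
  define s where "s = sqrt q"
  define r where "r = sqrt(1-2*q)"
  define t where "t = sqrt T"
  have s: "0 < s" "s < 1" unfolding s_def using q by (auto simp: real_sqrt_less_iff[of q 1, simplified])
  have r: "0 < r" unfolding r_def using q by auto
  have t: "0 \<le> t" unfolding t_def using T by auto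
  have f: "q*(vm q T - 1) = ((1 + s)*t - r)*((1 - s)*t - r)" using vm_fac[OF T q] unfolding s_def r_def t_def .
  have tp1: "0 < t1 q" and tp2: "0 < t2 q" using basic_facts[OF q] by auto
  have sq1: "T \<le> (t1 q)^2 \<longleftrightarrow> t \<le> t1 q" unfolding t_def using tp1 T
    by (metis less_imp_le real_sqrt_le_iff real_sqrt_pow2 real_sqrt_unique zero_le_power2)
  have sq2: "(t1 q)^2 \<le> T \<longleftrightarrow> t1 q \<le> t" unfolding t_def using tp1 T
    by (metis less_imp_le real_sqrt_le_iff real_sqrt_unique zero_le_power2)
  have sq3: "T \<le> (t2 q)^2 \<longleftrightarrow> t \<le> t2 q" unfolding t_def using tp2 T
    by (metis less_imp_le real_sqrt_le_iff real_sqrt_unique zero_le_power2)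
  have sq4: "(t2 q)^2 \<le> T \<longleftrightarrow> t2 q \<le> t" unfolding t_def using tp2 T
    by (metis less_imp_le real_sqrt_le_iff real_sqrt_unique zero_le_power2)
  have e1: "t \<le> t1 q \<longleftrightarrow> (1+s)*t \<le> r" unfolding t1_def s_def[symmetric] r_def[symmetric] using s
    by (simp add: le_divide_eq mult.commute)
  have e2: "t \<le> t2 q \<longleftrightarrow> (1-s)*t \<le> r" unfolding t2_def s_def[symmetric] r_def[symmetric] using s
    by (simp add: le_divide_eq mult.commute)
  have e1': "t1 q \<le> t \<longleftrightarrow> r \<le> (1+s)*t" unfolding t1_def s_def[symmetric] r_def[symmetric] using s
    by (simp add: divide_le_eq mult.commute)
  have e2': "t2 q \<le> t \<longleftrightarrow> r \<le> (1-s)*t" unfolding t2_def s_def[symmetric] r_def[symmetric] using s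
    by (simp add: divide_le_eq mult.commute)
  have m: "(1-s)*t \<le> (1+s)*t" using s t by (intro mult_right_mono) auto
  show "T \<le> (t1 q)^2 \<Longrightarrow> min 1 (vm q T) = 1"
  proof -
    assume "T \<le> (t1 q)^2"
    then have "(1+s)*t - r \<le> 0" "(1-s)*t - r \<le> 0" using sq1 e1 m by auto
    then have "q*(vm q T - 1) \<ge> 0" unfolding f by (simp add: mult_nonpos_nonpos)
    then have "vm q T \<ge> 1" using q by (simp add: zero_le_mult_iff)
    then show ?thesis by simp
  qed
  show "(t1 q)^2 \<le> T \<Longrightarrow> T \<le> (t2 q)^2 \<Longrightarrow> min 1 (vm q T) = vm q T"
  proof -
    assume "(t1 q)^2 \<le> T" "T \<le> (t2 q)^2"
    then have "(1+s)*t - r \<ge> 0" "(1-s)*t - r \<le> 0" using sq2 sq3 e2 e1' by auto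
    then have "q*(vm q T - 1) \<le> 0" unfolding f by (simp add: mult_nonneg_nonpos)
    then have "vm q T \<le> 1" using q by (simp add: mult_le_0_iff)
    then show ?thesis by simp
  qed
  show "(t2 q)^2 \<le> T \<Longrightarrow> min 1 (vm q T) = 1"
  proof -
    assume "(t2 q)^2 \<le> T"
    then have "(1-s)*t - r \<ge> 0" using sq4 e2' by auto
    then have "(1+s)*t - r \<ge> 0" "(1-s)*t - r \<ge> 0" using m by auto
    then have "q*(vm q T - 1) \<ge> 0" unfolding f by (simp add: mult_nonneg_nonneg)
    then have "vm q T \<ge> 1" using q by (simp add: zero_le_mult_iff)
    then show ?thesis by simp
  qed
qed


lemma gfun_integral:
  assumes q: "0 < q" "q < 1/2"
  shows "(gfun q has_integral Ival q) {0<..<1}"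
proof -
  define a1 where "a1 = (t1 q)^2"
  define a2 where "a2 = (t2 q)^2"
  note bf = basic_facts[OF q]
  have a1: "0 < a1" "a1 < 1" unfolding a1_def using bf
    by (auto simp: power_less_one_iff)
  have a12: "a1 < a2" unfolding a1_def a2_def using bf by (intro power_strict_mono) auto
  have q1: "1 - q \<noteq> 0" using q by auto
  have P1: "(gfun q has_integral (F1 q a1 - F1 q 0)) {0..a1}"
  proof -
    have "((\<lambda>T. 1 - q*T/(1-q)) has_integral (F1 q a1 - F1 q 0)) {0..a1}"
      by (rule ftc_real) (use a1 F1_deriv q in auto)
    then show ?thesis
      by (rule has_integral_eq[rotated]) (use min_cases(1)[OF _ q] in \<open>auto simp: gfun_def a1_def\<close>)
  qed
  have F1i: "((\<lambda>T. 1 - q*T/(1-q)) has_integral (F1 q b - F1 q a)) {a..b}" if "a \<le> b" for a b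
    by (rule ftc_real) (use that F1_deriv q in auto)
  have F2i: "((\<lambda>T. vm q T - q*T/(1-q)) has_integral (F2 q b - F2 q a)) {a..b}" if "a1 \<le> a" "a \<le> b" for a b
    by (rule ftc_real) (use that a1 F2_deriv q in auto)
  show ?thesis
  proof (cases "q \<le> 4/9")
    case True
    then have a2: "1 \<le> a2" unfolding a2_def using bf by (simp add: one_le_power)
    have P2: "(gfun q has_integral (F2 q 1 - F2 q a1)) {a1..1}"
    proof (rule has_integral_eq[OF _ F2i[of a1 1]])
      fix T assume "T \<in> {a1..1}"
      then show "vm q T - q*T/(1-q) = gfun q T" using min_cases(2)[OF _ q, of T] a1 a2
        unfolding gfun_def a1_def a2_def by auto
    qed (use a1 in auto)
    have "(gfun q has_integral (F1 q a1 - F1 q 0) + (F2 q 1 - F2 q a1)) {0..1}"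
      by (rule has_integral_combine[OF _ _ P1 P2]) (use a1 in auto)
    then show ?thesis unfolding has_integral_Icc_iff_Ioo[symmetric] Ival_def using True
      by (simp add: a1_def algebra_simps)
  next
    case False
    then have a2: "a2 < 1" unfolding a2_def using bf by (simp add: power_less_one_iff)
    have P2: "(gfun q has_integral (F2 q a2 - F2 q a1)) {a1..a2}"
    proof (rule has_integral_eq[OF _ F2i[of a1 a2]])
      fix T assume "T \<in> {a1..a2}"
      then show "vm q T - q*T/(1-q) = gfun q T" using min_cases(2)[OF _ q, of T] a1
        unfolding gfun_def a1_def a2_def by auto
    qed (use a12 in auto)
    have P3: "(gfun q has_integral (F1 q 1 - F1 q a2)) {a2..1}"
    proof (rule has_integral_eq[OF _ F1i[of a2 1]])
      fix T assume "T \<in> {a2..1}"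
      then show "1 - q*T/(1-q) = gfun q T" using min_cases(3)[OF _ q, of T] a1 a12
        unfolding gfun_def a1_def a2_def by auto
    qed (use a2 in auto)
    have P12: "(gfun q has_integral (F1 q a1 - F1 q 0) + (F2 q a2 - F2 q a1)) {0..a2}"
      by (rule has_integral_combine[OF _ _ P1 P2]) (use a1 a12 in auto)
    have "(gfun q has_integral (F1 q a1 - F1 q 0) + (F2 q a2 - F2 q a1) + (F1 q 1 - F1 q a2)) {0..1}"
      by (rule has_integral_combine[OF _ _ P12 P3]) (use a1 a12 a2 in auto)
    then show ?thesis unfolding has_integral_Icc_iff_Ioo[symmetric] Ival_def using False
      by (simp add: a1_def a2_def algebra_simps)
  qed
qed


lemma F2alt: "F2 q T = (1-q)/q*(T + T^2/2) - (4/(3 * q)) * (sqrt(1-2 * q)*(T * sqrt T)) - q/(2 * (1-q))*T^2"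
  unfolding F2_def by (simp add: field_simps)

lemma F1alt: "F1 q T = T - q/(2 * (1-q))*T^2"
  unfolding F1_def by simp

lemma G:
  fixes \<sigma> p W a q :: real
  assumes q: "q = \<sigma>^2" "q \<noteq> 0" "1 - q \<noteq> 0" and p: "p = 1 + \<sigma>" "p \<noteq> 0" and W: "W = 1 - 2 * q"
    and a: "a = W/p^2" and X: "sqrt(1-2 * q)*(a * sqrt a) = W^2/p^3"
  shows "F1 q a - F2 q a = 0 - W^2 * (1 + 3 * \<sigma>)/(6 * q * p^3)"
proof -
  have m: "1 - q = (1 - \<sigma>) * p" using q p by (simp add: algebra_simps power2_eq_square)
  have h0: "F1 q a - F2 q a = a - (1-q)/q*(a + a^2/2) + (4/(3 * q)) * (W^2/p^3)"
    unfolding F1alt F2alt X by simp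
  have "a - (1-q)/q * a = 0 - (W * a)/q" using q unfolding W by (simp add: field_simps)
  also have "\<dots> = 0 - W^2/(q * p^2)" unfolding a by (simp add: power2_eq_square)
  finally have h1: "a - (1-q)/q * a = 0 - W^2/(q * p^2)" .
  have h2: "(1-q)/(2 * q) * a^2 = (1-\<sigma>) * W^2/(2 * q * p^3)" unfolding m a using p(2) q(2)
    by (simp add: field_simps power2_eq_square power3_eq_cube)
  have h3: "a - (1-q)/q*(a + a^2/2) = (a - (1-q)/q * a) - (1-q)/(2 * q) * a^2"
    using q by (simp add: field_simps)
  have h4: "0 - W^2/(q * p^2) - (1-\<sigma>) * W^2/(2 * q * p^3) + (4/(3 * q)) * (W^2/p^3)
      = W^2/(q * p^3) * (0 - p - (1-\<sigma>)/2 + 4/3)"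
    using p(2) q(2) by (simp add: field_simps power2_eq_square power3_eq_cube)
  have h5: "0 - p - (1-\<sigma>)/2 + 4/3 = 0 - (1 + 3 * \<sigma>)/6" unfolding p by (simp add: field_simps)
  show ?thesis unfolding h0 h3 h1 h2 h4 h5 by simp
qed

lemma case1_alg:
  fixes s r :: real
  assumes s: "0 < s" "s^2 < 1/2"
  shows "0 - (1-2 * s^2)^2 * (1 + 3 * s)/(6 * s^2 * (1+s)^3) + ((1-s^2)/s^2*(1 + 1^2/2) - (4/(3 * s^2)) * (r * (1 * 1)) - s^2/(2 * (1-s^2))*1^2)
  = 1 - s^2 / (2 * (1 - s^2)) - (1 / (1 - 2 * s^2)) *
         ( (3 * s + 2) ^ 2 * s *
             (5 * s^2 * s + 3 * (s^2) ^ 2 - 9 * s^2 - 3 * s + 4)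
             / (12 * (s + 1) ^ 3)
         + (- 27 * (s^2) ^ 3 - 18 * (s^2) ^ 2 - 32 * r * s^2 + 48 * s^2
             + 16 * r - 16) / (12 * s^2) )"
proof -
  define W where "W = 1 - 2 * s^2"
  have h: "s \<noteq> 0" "1 + s \<noteq> 0" "1 - s^2 \<noteq> 0" "W \<noteq> 0" "s + 1 \<noteq> 0" using s unfolding W_def by auto
  define X where "X = (3 * s + 2) ^ 2 * s * (5 * s^2 * s + 3 * (s^2) ^ 2 - 9 * s^2 - 3 * s + 4)"
  define Y0 where "Y0 = - 27 * (s^2) ^ 3 - 18 * (s^2) ^ 2 + 48 * s^2 - 16"
  have Y: "- 27 * (s^2) ^ 3 - 18 * (s^2) ^ 2 - 32 * r * s^2 + 48 * s^2 + 16 * r - 16 = Y0 + 16 * r * W"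
    unfolding Y0_def W_def by (simp add: algebra_simps)
  have e1: "(1 / W) * (X / (12 * (s+1)^3) + (Y0 + 16 * r * W)/(12 * s^2))
     = X/(12 * (s+1)^3 * W) + Y0/(12 * s^2 * W) + 4 * r/(3 * s^2)"
    using h by (simp add: field_simps)
  have e2: "3 * (1-s^2)/(2 * s^2) - W^2 * (1+3 * s)/(6 * s^2 * (1+s)^3) = 1 - X/(12 * (s+1)^3 * W) - Y0/(12 * s^2 * W)"
  proof -
    have "12 * s^2 * (1+s)^3 * W * (3 * (1-s^2)/(2 * s^2) - W^2 * (1+3 * s)/(6 * s^2 * (1+s)^3))
        = 18 * (1-s^2) * (1+s)^3 * W - 2 * W^3 * (1 + 3 * s)"
      using h by (simp add: field_simps) (simp add: power3_eq_cube power2_eq_square algebra_simps)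
    also have "\<dots> = 12 * s^2 * (1+s)^3 * W - s^2 * X - (1+s)^3 * Y0"
      unfolding W_def X_def Y0_def by (simp add: algebra_simps power2_eq_square power3_eq_cube)
    also have "\<dots> = 12 * s^2 * (1+s)^3 * W * (1 - X/(12 * (s+1)^3 * W) - Y0/(12 * s^2 * W))"
      using h by (simp add: field_simps)
    finally show ?thesis using h by simp
  qed
  show ?thesis
    unfolding X_def[symmetric] Y W_def[symmetric] e1
    using e2 by (simp add: algebra_simps add_divide_distrib diff_divide_distrib)
qed


lemma case2_alg:
  fixes s :: real
  assumes s: "0 < s" "s < 1"
  shows "0 - (1-2 * s^2)^2 * (1 + 3 * s)/(6 * s^2 * (1+s)^3) + (1-2 * s^2)^2 * (1 - 3 * s)/(6 * s^2 * (1-s)^3)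
     = 0 - 8 * s * (1 - 2 * s^2)^2 / (3 * (1 - s^2)^3)"
proof -
  have h: "s \<noteq> 0" "1 + s \<noteq> 0" "1 - s \<noteq> 0" using s by auto
  have k: "(1 - s^2)^3 = (1-s)^3 * (1+s)^3" by (simp add: power2_eq_square power_mult_distrib[symmetric] algebra_simps)
  have "(1 - 3 * s)/(1-s)^3 - (1 + 3 * s)/(1+s)^3 = ((1 - 3 * s) * (1+s)^3 - (1 + 3 * s) * (1-s)^3)/((1-s)^3 * (1+s)^3)"
    using h by (simp add: field_simps)
  also have "(1 - 3 * s) * (1+s)^3 - (1 + 3 * s) * (1-s)^3 = - 16 * s^3"
    by (simp add: power3_eq_cube algebra_simps)
  finally have e: "(1 - 3 * s)/(1-s)^3 - (1 + 3 * s)/(1+s)^3 = - 16 * s^3 / (1 - s^2)^3" unfolding k .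
  have "0 - (1-2 * s^2)^2 * (1 + 3 * s)/(6 * s^2 * (1+s)^3) + (1-2 * s^2)^2 * (1 - 3 * s)/(6 * s^2 * (1-s)^3)
      = (1-2 * s^2)^2/(6 * s^2) * ((1 - 3 * s)/(1-s)^3 - (1 + 3 * s)/(1+s)^3)"
    using h by (simp add: field_simps)
  also have "\<dots> = 0 - 8 * s * (1 - 2 * s^2)^2 / (3 * (1 - s^2)^3)"
  proof -
    have "s * s < 1 * 1" by (rule mult_strict_mono) (use s in auto)
    then have D: "(1 - s^2)^3 \<noteq> 0" by (simp add: power2_eq_square)
    have "- 16 * s^3 / (1 - s^2)^3 = - 16 * s * s^2 / (1 - s^2)^3" by (simp add: power2_eq_square power3_eq_cube mult_ac)
    then show ?thesis unfolding e using h D by (simp add: field_simps)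
  qed
  finally show ?thesis .
qed

lemma Ival_formula:
  fixes q :: real
  assumes q: "0 < q" "q < 1/2"
  shows "Ival q =
    (if q \<le> 4/9 then
       1 - q / (2 * (1 - q)) - (1 / (1 - 2 * q)) *
         ( (3 * sqrt q + 2) ^ 2 * sqrt q *
             (5 * q * sqrt q + 3 * q ^ 2 - 9 * q - 3 * sqrt q + 4)
             / (12 * (sqrt q + 1) ^ 3)
         + (- 27 * q ^ 3 - 18 * q ^ 2 - 32 * sqrt (1 - 2 * q) * q + 48 * q
             + 16 * sqrt (1 - 2 * q) - 16) / (12 * q) )
     else
       1 - q / (2 * (1 - q)) - 8 * sqrt q * (1 - 2 * q) ^ 2 / (3 * (1 - q) ^ 3))"
proof -
  define s where "s = sqrt q"
  define r where "r = sqrt (1 - 2 * q)"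
  define W where "W = 1 - 2 * q"
  have s: "0 < s" "s < 1" "q = s^2" unfolding s_def using q by (auto simp: real_sqrt_less_iff[of q 1, simplified])
  have r: "0 < r" "r^2 = W" unfolding r_def W_def using q by auto
  have q0: "q \<noteq> 0" "1 - q \<noteq> 0" using q by auto
  have s2: "s^2 < 1/2" using s q by simp
  have sub: "\<And>p t. 0 < p \<Longrightarrow> t = r / p \<Longrightarrow> t^2 = W/p^2 \<and> sqrt(1-2 * q) * (t^2 * sqrt (t^2)) = W^2/p^3"
  proof -
    fix p t :: real assume p: "0 < p" and t: "t = r / p"
    then have t0: "0 \<le> t" using r by auto
    have "t^2 = W/p^2" unfolding t using r by (simp add: power_divide)
    moreover have "sqrt(1-2 * q) * (t^2 * sqrt (t^2)) = W^2/p^3"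
    proof -
      have "sqrt (t^2) = t" using t0 by simp
      then have "sqrt(1-2 * q) * (t^2 * sqrt (t^2)) = (r^2)^2 / p^3"
        unfolding r_def[symmetric] t by (simp add: power_divide power2_eq_square power3_eq_cube)
      then show ?thesis using r by simp
    qed
    ultimately show "t^2 = W/p^2 \<and> sqrt(1-2 * q) * (t^2 * sqrt (t^2)) = W^2/p^3" by simp
  qed
  have sq: "sqrt q = s" "sqrt (1 - 2 * q) = r" unfolding s_def r_def by auto
  have t1e: "t1 q = r/(1+s)" unfolding t1_def r_def s_def ..
  have t2e: "t2 q = r/(1-s)" unfolding t2_def r_def s_def ..
  have p1: "0 < 1 + s" "0 < 1 - s" using s by auto
  note A1 = conjunct1[OF sub[OF p1(1) t1e]] conjunct2[OF sub[OF p1(1) t1e]]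
  note A2 = conjunct1[OF sub[OF p1(2) t2e]] conjunct2[OF sub[OF p1(2) t2e]]
  have G1: "F1 q ((t1 q)^2) - F2 q ((t1 q)^2) = 0 - W^2 * (1 + 3 * s)/(6 * q * (1+s)^3)"
    by (rule G[OF s(3) q0 refl _ W_def A1]) (use s in auto)
  have G2: "F1 q ((t2 q)^2) - F2 q ((t2 q)^2) = 0 - W^2 * (1 + 3 * (-s))/(6 * q * (1+(-s))^3)"
    by (rule G[of q "-s" "1 + (-s)", OF _ q0 refl _ W_def]) (use s A2 in auto)
  have F10: "F1 q 0 = 0" unfolding F1_def by simp
  have F11: "F1 q 1 = 1 - q / (2 * (1 - q))" unfolding F1_def by simp
  have F21: "F2 q 1 = (1-q)/q*(1 + 1^2/2) - (4/(3 * q)) * (r * (1 * 1)) - q/(2 * (1-q))*1^2"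
    unfolding F2alt r_def by simp
  show ?thesis
  proof (cases "q \<le> 4/9")
    case True
    have "Ival q = (F1 q ((t1 q)^2) - F2 q ((t1 q)^2)) - F1 q 0 + F2 q 1"
      unfolding Ival_def using True by simp
    also have "\<dots> = 0 - W^2 * (1 + 3 * s)/(6 * q * (1+s)^3) + ((1-q)/q*(1 + 1^2/2) - (4/(3 * q)) * (r * (1 * 1)) - q/(2 * (1-q))*1^2)"
      unfolding G1 F10 F21 by simp
    also have "\<dots> = 1 - s^2 / (2 * (1 - s^2)) - (1 / (1 - 2 * s^2)) *
         ( (3 * s + 2) ^ 2 * s *
             (5 * s^2 * s + 3 * (s^2) ^ 2 - 9 * s^2 - 3 * s + 4)
             / (12 * (s + 1) ^ 3)
         + (- 27 * (s^2) ^ 3 - 18 * (s^2) ^ 2 - 32 * r * s^2 + 48 * s^2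
             + 16 * r - 16) / (12 * s^2) )"
      using case1_alg[OF s(1) s2, of r] unfolding W_def s(3) by (simp add: mult.assoc)
    finally have fin: "Ival q = 1 - s^2 / (2 * (1 - s^2)) - (1 / (1 - 2 * s^2)) *
         ( (3 * s + 2) ^ 2 * s *
             (5 * s^2 * s + 3 * (s^2) ^ 2 - 9 * s^2 - 3 * s + 4)
             / (12 * (s + 1) ^ 3)
         + (- 27 * (s^2) ^ 3 - 18 * (s^2) ^ 2 - 32 * r * s^2 + 48 * s^2
             + 16 * r - 16) / (12 * s^2) )" .
    show ?thesis using True fin unfolding sq unfolding s(3) by simp
  next
    case False
    have "Ival q = (F1 q ((t1 q)^2) - F2 q ((t1 q)^2)) - (F1 q ((t2 q)^2) - F2 q ((t2 q)^2)) - F1 q 0 + F1 q 1"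
      unfolding Ival_def using False by simp
    also have "\<dots> = (0 - W^2 * (1 + 3 * s)/(6 * q * (1+s)^3) + W^2 * (1 - 3 * s)/(6 * q * (1-s)^3)) + (1 - q / (2 * (1 - q)))"
      unfolding G1 G2 F10 F11 by simp
    also have "\<dots> = 1 - q / (2 * (1 - q)) - 8 * s * W^2 / (3 * (1 - q)^3)"
      using case2_alg[OF s(1) s(2)] unfolding W_def s(3) by (simp add: mult.assoc)
    finally have fin: "Ival q = 1 - q / (2 * (1 - q)) - 8 * s * W^2 / (3 * (1 - q)^3)" .
    show ?thesis using False fin unfolding sq W_def by simp
  qed
qed


lemma vm_ge:
  assumes q: "0 < q" "q < 1/2" and T: "0 \<le> T"
  shows "q*T/(1-q) \<le> vm q T"
proof -
  define z where "z = sqrt((1-2 * q) * T)"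
  have z2: "z^2 = (1-2 * q) * T" unfolding z_def using q T by simp
  define V where "V = q * vm q T"
  have hV: "V = (1-q)*(1+T) - 2 * z" unfolding V_def vm_def z_def using q by simp
  have "((1-q) - z)^2 = (1-q)^2 - 2*(1-q)*z + z^2" by (simp add: power2_eq_square algebra_simps)
  also have "\<dots> = (1-q) * V - q^2 * T" unfolding z2 hV by (simp add: power2_eq_square algebra_simps)
  finally have "(1-q) * (q * vm q T) - q^2 * T = ((1-q) - z)^2" unfolding V_def by simp
  then have "(1-q) * (q * vm q T) \<ge> q^2 * T" by (smt (verit) zero_le_power2)
  then have "q * ((1-q) * vm q T) \<ge> q * (q * T)" by (simp add: power2_eq_square algebra_simps)
  then have "(1-q) * vm q T \<ge> q * T" using q by simp
  then show ?thesis using q by (simp add: divide_le_eq mult.commute)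
qed

lemma section_eq:
  assumes q: "0 < q" "q < 1/2" and T: "0 < T" "T < 1"
  shows "{-1<..<0} \<inter> {S. good q T S} = {max (-1) (- vm q T) <..< - (q*T/(1-q))}"
proof -
  have pos: "0 < q*T/(1-q)" using q T by simp
  show ?thesis
  proof (intro set_eqI iffI)
    fix S assume "S \<in> {-1<..<0} \<inter> {S. good q T S}"
    then show "S \<in> {max (-1) (- vm q T) <..< - (q*T/(1-q))}" using box_iff[OF q T, of S] by auto
  next
    fix S assume "S \<in> {max (-1) (- vm q T) <..< - (q*T/(1-q))}"
    then show "S \<in> {-1<..<0} \<inter> {S. good q T S}" using box_iff[OF q T, of S] pos by auto
  qed
qed

lemma section_measure:
  assumes q: "0 < q" "q < 1/2" and T: "0 < T" "T < 1"
  shows "emeasure lborel ({-1<..<0} \<inter> {S. good q T S}) = ennreal (gfun q T)"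
proof -
  have le1: "q*T/(1-q) \<le> 1"
  proof -
    have "q*T \<le> q*1" using q T by (intro mult_left_mono) auto
    then have "q*T \<le> 1 - q" using q by linarith
    then show ?thesis using q by (simp add: divide_le_eq)
  qed
  have "max (-1) (- vm q T) \<le> - (q*T/(1-q))" using vm_ge[OF q] T le1 by auto
  then show ?thesis unfolding section_eq[OF q T] gfun_def by (simp add: min_def max_def)
qed

lemma gfun_nonneg:
  assumes q: "0 < q" "q < 1/2" and T: "0 < T" "T < 1"
  shows "0 \<le> gfun q T"
proof -
  have le1: "q*T/(1-q) \<le> 1"
  proof -
    have "q*T \<le> q*1" using q T by (intro mult_left_mono) auto
    then have "q*T \<le> 1 - q" using q by linarith
    then show ?thesis using q by (simp add: divide_le_eq)
  qed
  show ?thesis using vm_ge[OF q] T le1 unfolding gfun_def by auto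
qed

theorem theorem2p3:
  fixes q :: real
  assumes "0 < q" and "q < 1/2"
  shows "p3_SH q =
    (if q \<le> 4/9 then
       1 - q / (2 * (1 - q)) - (1 / (1 - 2 * q)) *
         ( (3 * sqrt q + 2) ^ 2 * sqrt q *
             (5 * q * sqrt q + 3 * q ^ 2 - 9 * q - 3 * sqrt q + 4)
             / (12 * (sqrt q + 1) ^ 3)
         + (- 27 * q ^ 3 - 18 * q ^ 2 - 32 * sqrt (1 - 2 * q) * q + 48 * q
             + 16 * sqrt (1 - 2 * q) - 16) / (12 * q) )
     else
       1 - q / (2 * (1 - q)) - 8 * sqrt q * (1 - 2 * q) ^ 2 / (3 * (1 - q) ^ 3))"
proof -
  note q = assms
  define U1 where "U1 = uniform_measure lborel {0<..<1::real}"
  define U2 where "U2 = uniform_measure lborel {-1<..<0::real}"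
  define X where "X = {p::real\<times>real. good q (fst p) (snd p)}"
  have TS: "TS_law = U1 \<Otimes>\<^sub>M U2" unfolding TS_law_def U1_def U2_def ..
  have sp: "space TS_law = UNIV" unfolding TS by (simp add: U1_def U2_def space_pair_measure)
  have Xeq: "{(T, S) \<in> space TS_law. card {x \<in> {0..1}. P_TS q T S x = 0} = 3} = X"
    unfolding sp X_def using card3_iff[of q] q by auto
  have predX: "Measurable.pred (borel \<Otimes>\<^sub>M borel) (\<lambda>p::real\<times>real. good q (fst p) (snd p))"
    unfolding good_def R1_def R2_def qD_def discrim_def qA_def qB_def qC_def by measurable
  have setsTS: "sets (U1 \<Otimes>\<^sub>M U2) = sets (borel \<Otimes>\<^sub>M borel)"
    unfolding U1_def U2_def by (intro sets_pair_measure_cong) auto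
  have Xs: "X \<in> sets (U1 \<Otimes>\<^sub>M U2)"
  proof -
    have "{p \<in> space (borel \<Otimes>\<^sub>M borel). good q (fst p) (snd p)} \<in> sets (borel \<Otimes>\<^sub>M borel)"
      using predX by (simp add: pred_def)
    moreover have "{p \<in> space (borel \<Otimes>\<^sub>M borel). good q (fst p) (snd p)} = X"
      unfolding X_def by (auto simp: space_pair_measure)
    ultimately show ?thesis using setsTS by simp
  qed
  have e2: "emeasure lborel {-1<..<0::real} = 1" by simp
  have e1: "emeasure lborel {0<..<1::real} = 1" by simp
  interpret U2: prob_space U2 unfolding U2_def by (rule prob_space_uniform_measure) (simp_all add: e2)
  have "emeasure TS_law X = (\<integral>\<^sup>+T. emeasure U2 (Pair T -` X) \<partial>U1)"
    unfolding TS by (rule U2.emeasure_pair_measure_alt[OF Xs])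
  also have "\<dots> = (\<integral>\<^sup>+T. emeasure U2 (Pair T -` X) * indicator {0<..<1} T \<partial>lborel) / emeasure lborel {0<..<1::real}"
    unfolding U1_def
  proof (rule nn_integral_uniform_measure)
    have "(\<lambda>T. emeasure U2 (Pair T -` X)) \<in> borel_measurable U1"
      by (rule U2.measurable_emeasure_Pair[OF Xs])
    then show "(\<lambda>T. emeasure U2 (Pair T -` X)) \<in> borel_measurable lborel"
      unfolding U1_def by (simp add: measurable_cong_sets[OF sets_uniform_measure refl])
  qed simp
  also have "\<dots> = (\<integral>\<^sup>+T. ennreal (gfun q T) * indicator {0<..<1} T \<partial>lborel)"
  proof -
    have d1: "(x::ennreal) / 1 = x" for x by (simp add: divide_ennreal_def)
    have calc: "(\<integral>\<^sup>+T. emeasure U2 (Pair T -` X) * indicator {0<..<1} T \<partial>lborel) = (\<integral>\<^sup>+T. ennreal (gfun q T) * indicator {0<..<1} T \<partial>lborel)"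
    proof (intro nn_integral_cong)
      fix T :: real
      show "emeasure U2 (Pair T -` X) * indicator {0<..<1} T = ennreal (gfun q T) * indicator {0<..<1} T"
      proof (cases "T \<in> {0<..<1}")
        case True
        have ps: "Pair T -` X = {S. good q T S}" unfolding X_def by auto
        have ms: "{S. good q T S} \<in> sets lborel"
        proof -
          have "Pair T -` X \<in> sets U2" using Xs by (rule sets_Pair1)
          then show ?thesis unfolding ps U2_def by simp
        qed
        have "emeasure U2 (Pair T -` X) = emeasure lborel ({-1<..<0} \<inter> {S. good q T S})"
          unfolding ps U2_def using ms by (simp add: e2 d1)
        also have "\<dots> = ennreal (gfun q T)" using section_measure[OF q] True by auto
        finally show ?thesis by simp
      qed simp
    qed
    show ?thesis unfolding e1 d1 calc by (rule refl)
  qed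
  also have "\<dots> = ennreal (Ival q)"
    by (rule nn_integral_has_integral_lebesgue'[OF _ gfun_integral[OF q]]) (use gfun_nonneg[OF q] in auto)
  finally have em: "emeasure TS_law X = ennreal (Ival q)" .
  have "Ival q \<ge> 0"
    using has_integral_nonneg[OF gfun_integral[OF q]] gfun_nonneg[OF q] by auto
  then have "measure TS_law X = Ival q" using em by (simp add: measure_def)
  then have "p3_SH q = Ival q" unfolding p3_SH_def Xeq .
  then show ?thesis using Ival_formula[OF q] by simp
qed
end
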